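(* Let $\Omega_2=\{(x,y)\in\mathbb{R}^2: x\neq0,\ y<x^{-2}\sin(x^2)\}\cup\{(0,y):y<1\}$. Then $\Omega_2$ is a $C^\infty$ domain which has a uniformly $C^2$ defining function (in particular $\partial\Omega_2$ has positive reach), but $\Omega_2$ has no uniformly $C^3$ defining function.
   Context: A $C^m$ defining function for an open set $\Omega\subset\mathbb{R}^n$ is a real-valued $C^m$ function $\rho$ on an open neighborhood $U$ of $\partial\Omega$ with $\{x\in U:\rho<0\}=\Omega\cap U$ and $\nabla\rho\neq0$ on $\partial\Omega$. It is uniformly $C^m$ if $\operatorname{dist}(\partial\Omega,\partial U)>0$, $\sup_{U}\sum_{|\alpha|\le m}|\partial^\alpha\rho|<\infty$, and $\inf_U|\nabla\rho|>0$. Reach: with $\operatorname{Unp}(\partial\Omega)$ the set of points having a unique nearest point in $\partial\Omega$, $\operatorname{reach}(\partial\Omega)=\inf_{y\in\partial\Omega}\sup\{r\ge0:B(y,r)\subset\operatorname{Unp}(\partial\Omega)\}$. *)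

theory Defs
  imports "HOL-Analysis.Analysis"
begin

definition D1 :: "(real \<times> real \<Rightarrow> real) \<Rightarrow> real \<times> real \<Rightarrow> real" where
  "D1 f p = deriv (\<lambda>t. f (t, snd p)) (fst p)"

definition D2 :: "(real \<times> real \<Rightarrow> real) \<Rightarrow> real \<times> real \<Rightarrow> real" where
  "D2 f p = deriv (\<lambda>t. f (fst p, t)) (snd p)"

fun Cm :: "nat \<Rightarrow> (real \<times> real) set \<Rightarrow> (real \<times> real \<Rightarrow> real) \<Rightarrow> bool" where
  "Cm 0 U f = continuous_on U f"
| "Cm (Suc m) U f =
     (continuous_on U f \<and>
      (\<forall>p\<in>U. (\<lambda>t. f (t, snd p)) differentiable (at (fst p)) \<and>
              (\<lambda>t. f (fst p, t)) differentiable (at (snd p))) \<and>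
      Cm m U (D1 f) \<and> Cm m U (D2 f))"

fun pderivs :: "nat \<Rightarrow> (real \<times> real \<Rightarrow> real) \<Rightarrow> (real \<times> real \<Rightarrow> real) set" where
  "pderivs 0 f = {f}"
| "pderivs (Suc m) f = {f} \<union> pderivs m (D1 f) \<union> pderivs m (D2 f)"

definition grad :: "(real \<times> real \<Rightarrow> real) \<Rightarrow> real \<times> real \<Rightarrow> real \<times> real" where
  "grad f p = (D1 f p, D2 f p)"

definition defining_function ::
  "nat \<Rightarrow> (real \<times> real) set \<Rightarrow> (real \<times> real) set \<Rightarrow> (real \<times> real \<Rightarrow> real) \<Rightarrow> bool" where
  "defining_function m \<Omega> U \<rho> \<longleftrightarrow>
     open U \<and> frontier \<Omega> \<subseteq> U \<and> Cm m U \<rho> \<and>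
     {p\<in>U. \<rho> p < 0} = \<Omega> \<inter> U \<and>
     (\<forall>p\<in>frontier \<Omega>. grad \<rho> p \<noteq> 0)"

definition smooth_defining_function ::
  "(real \<times> real) set \<Rightarrow> (real \<times> real) set \<Rightarrow> (real \<times> real \<Rightarrow> real) \<Rightarrow> bool" where
  "smooth_defining_function \<Omega> U \<rho> \<longleftrightarrow> (\<forall>m. defining_function m \<Omega> U \<rho>)"

definition uniform_defining_function ::
  "nat \<Rightarrow> (real \<times> real) set \<Rightarrow> (real \<times> real) set \<Rightarrow> (real \<times> real \<Rightarrow> real) \<Rightarrow> bool" where
  "uniform_defining_function m \<Omega> U \<rho> \<longleftrightarrow>
     defining_function m \<Omega> U \<rho> \<and>
     (\<exists>\<delta>>0. \<forall>a\<in>frontier \<Omega>. \<forall>b\<in>frontier U. \<delta> \<le> dist a b) \<and>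
     (\<exists>B. \<forall>p\<in>U. (\<Sum>g\<in>pderivs m \<rho>. \<bar>g p\<bar>) \<le> B) \<and>
     (\<exists>c>0. \<forall>p\<in>U. c \<le> norm (grad \<rho> p))"

definition Unp :: "'a::metric_space set \<Rightarrow> 'a set" where
  "Unp S = {x. \<exists>!y. y \<in> S \<and> (\<forall>z\<in>S. dist x y \<le> dist x z)}"

definition reach :: "'a::metric_space set \<Rightarrow> ereal" where
  "reach S = (INF y\<in>S. SUP r\<in>{r::real. 0 \<le> r \<and> ball y r \<subseteq> Unp S}. ereal r)"

definition Omega2 :: "(real \<times> real) set" where
  "Omega2 = {(x, y). x \<noteq> 0 \<and> y < sin (x^2) / x^2} \<union> {(0, y) | y. y < 1}"

end

theory Submission
  imports Defs
begin


definition dco :: "nat \<Rightarrow> real" where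
  "dco m = (if even m then sin_coeff (m div 2) else 0)"

definition cco :: "nat \<Rightarrow> real" where "cco n = dco (n + 2)"

definition Fk :: "nat \<Rightarrow> real \<Rightarrow> real" where
  "Fk k x = (\<Sum>n. (diffs ^^ k) cco n * x ^ n)"

abbreviation FF :: "real \<Rightarrow> real" where "FF \<equiv> Fk 0"

lemma dco_sums: "(\<lambda>m. dco m * x ^ m) sums sin (x^2)"
proof -
  have "(\<lambda>n. sin_coeff n * (x^2) ^ n) sums sin (x^2)"
    using sin_converges[of "x^2"] by simp
  hence "(\<lambda>n. dco (2*n) * x ^ (2*n)) sums sin (x^2)"
    by (simp add: dco_def power_mult)
  moreover have "strict_mono (\<lambda>n::nat. 2*n)" by (auto simp: strict_mono_def)
  ultimately show ?thesis
    using sums_mono_reindex[of "\<lambda>n::nat. 2*n" "\<lambda>m. dco m * x ^ m"]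
    by (metis (no_types, lifting) dco_def evenE mult_eq_0_iff rangeI)
qed

lemma cco_sums: "(\<lambda>n. cco n * x ^ n * x^2) sums sin (x^2)"
proof -
  have "(\<lambda>i. dco (i+2) * x ^ (i+2)) sums sin (x^2)"
    using sums_zero_iff_shift[of 2 "\<lambda>i. dco i * x ^ i" "sin (x^2)"] dco_sums[of x]
    by (auto simp: dco_def less_2_cases_iff)
  thus ?thesis by (simp add: cco_def power_add mult.assoc power2_eq_square mult.commute mult.left_commute)
qed

lemma cco_summable: "summable (\<lambda>n. cco n * x ^ n)"
proof (cases "x = 0")
  case True thus ?thesis by simp
next
  case False
  have "(\<lambda>n. cco n * x ^ n * x^2 * (1/x^2)) sums (sin (x^2) * (1/x^2))"
    by (rule sums_mult2[OF cco_sums])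
  thus ?thesis using False by (simp add: sums_summable)
qed

lemma FF_eq: "x \<noteq> 0 \<Longrightarrow> FF x = sin (x^2) / x^2"
proof -
  assume x: "x \<noteq> 0"
  have "(\<lambda>n. cco n * x ^ n * x^2 * (1/x^2)) sums (sin (x^2) * (1/x^2))"
    by (rule sums_mult2[OF cco_sums])
  hence "(\<lambda>n. cco n * x ^ n) sums (sin (x^2) / x^2)" using x by simp
  thus ?thesis by (simp add: Fk_def sums_iff)
qed

lemma FF_0: "FF 0 = 1"
  by (simp add: Fk_def cco_def dco_def sin_coeff_def)

lemma Fk_summable: "summable (\<lambda>n. (diffs ^^ k) cco n * x ^ n)"
proof (induction k arbitrary: x)
  case 0 thus ?case using cco_summable by simp
next
  case (Suc k) thus ?case using termdiff_converges_all[of "(diffs ^^ k) cco"] by simp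
qed

lemma Fk_deriv: "(Fk k has_real_derivative Fk (Suc k) x) (at x)"
  unfolding Fk_def using termdiffs_strong_converges_everywhere[OF Fk_summable[of k]] by simp

lemma Fk_cont: "continuous_on A (Fk k)"
  using Fk_deriv by (meson DERIV_isCont continuous_at_imp_continuous_on)




definition G1 :: "real \<Rightarrow> real" where "G1 x = 2 * cos (x^2)/x - 2 * sin (x^2)/x^3"
definition G2 :: "real \<Rightarrow> real" where "G2 x = -4 * sin (x^2) - 6 * cos (x^2)/x^2 + 6 * sin (x^2)/x^4"
definition G3 :: "real \<Rightarrow> real" where
  "G3 x = -8 * x * cos (x^2) + 12 * sin (x^2)/x + 24 * cos (x^2)/x^3 - 24 * sin (x^2)/x^5"

lemma transfer_deriv:
  assumes eq: "\<And>x. x \<noteq> 0 \<Longrightarrow> Fk k x = g x"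
    and dg: "\<And>x. x \<noteq> 0 \<Longrightarrow> (g has_real_derivative g' x) (at x)"
    and x: "x \<noteq> 0"
  shows "Fk (Suc k) x = g' x"
proof -
  have "(g has_real_derivative Fk (Suc k) x) (at x)"
    by (rule has_field_derivative_transform_within_open[OF Fk_deriv[of k x], of "-{0}"])
       (use x eq in auto)
  thus ?thesis using dg[OF x] DERIV_unique by blast
qed

lemma d0: "x \<noteq> 0 \<Longrightarrow> ((\<lambda>x. sin (x^2) / x^2) has_real_derivative G1 x) (at x)"
  unfolding G1_def
  by (rule derivative_eq_intros refl | simp)+ (simp add: field_simps eval_nat_numeral)

lemma d1: "x \<noteq> 0 \<Longrightarrow> (G1 has_real_derivative G2 x) (at x)"
  unfolding G1_def[abs_def] G2_def
  by (rule derivative_eq_intros refl | simp)+ (simp add: field_simps eval_nat_numeral)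

lemma d2: "x \<noteq> 0 \<Longrightarrow> (G2 has_real_derivative G3 x) (at x)"
  unfolding G2_def[abs_def] G3_def
  by (rule derivative_eq_intros refl | simp)+ (simp add: field_simps eval_nat_numeral)

lemma F1_eq: "x \<noteq> 0 \<Longrightarrow> Fk 1 x = G1 x"
  using transfer_deriv[of 0 "\<lambda>x. sin (x^2) / x^2" G1] FF_eq d0 by simp

lemma F2_eq: "x \<noteq> 0 \<Longrightarrow> Fk 2 x = G2 x"
  using transfer_deriv[of 1 G1 G2] F1_eq d1 by (simp add: numeral_2_eq_2)

lemma F3_eq: "x \<noteq> 0 \<Longrightarrow> Fk 3 x = G3 x"
  using transfer_deriv[of 2 G2 G3] F2_eq d2 by (simp add: numeral_3_eq_3 numeral_2_eq_2)




lemma div_le1: "\<bar>a::real\<bar> \<le> 1 \<Longrightarrow> 1 \<le> \<bar>y\<bar> \<Longrightarrow> \<bar>a / y\<bar> \<le> 1"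
  by (simp add: abs_divide divide_le_eq_1) 

lemma glob_bound:
  assumes "\<And>x. 1 \<le> \<bar>x\<bar> \<Longrightarrow> \<bar>Fk k x\<bar> \<le> M"
  shows "\<exists>B. \<forall>x. \<bar>Fk k x\<bar> \<le> B"
proof -
  have "compact (Fk k ` {-1..1})"
    by (rule compact_continuous_image[OF Fk_cont]) simp
  then obtain B where B: "\<And>y. y \<in> Fk k ` {-1..1} \<Longrightarrow> norm y \<le> B"
    using compact_imp_bounded bounded_pos by metis
  show ?thesis
  proof (intro exI allI)
    fix x :: real
    show "\<bar>Fk k x\<bar> \<le> max B M"
    proof (cases "1 \<le> \<bar>x\<bar>")
      case True thus ?thesis using assms by force
    next
      case False
      hence "x \<in> {-1..1}" by auto
      thus ?thesis using B[of "Fk k x"] by force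
    qed
  qed
qed

lemma pow_ge1: "1 \<le> \<bar>x::real\<bar> \<Longrightarrow> 1 \<le> \<bar>x ^ n\<bar>"
  by (simp add: power_abs one_le_power)

lemma F1_bound: "\<exists>L. \<forall>x. \<bar>Fk 1 x\<bar> \<le> L"
proof (rule glob_bound[where M=4])
  fix x :: real assume x: "1 \<le> \<bar>x\<bar>"
  hence "x \<noteq> 0" by auto
  have a: "\<bar>cos (x^2) / x\<bar> \<le> 1" by (rule div_le1) (use x in auto)
  have b: "\<bar>sin (x^2) / x^3\<bar> \<le> 1" by (rule div_le1) (use x pow_ge1 in auto)
  have "\<bar>G1 x\<bar> \<le> 4" unfolding G1_def using a b by (simp add: abs_le_iff; linarith)
  thus "\<bar>Fk 1 x\<bar> \<le> 4" using F1_eq[OF \<open>x \<noteq> 0\<close>] by simp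
qed

lemma F2_bound: "\<exists>K. \<forall>x. \<bar>Fk 2 x\<bar> \<le> K"
proof (rule glob_bound[where M=16])
  fix x :: real assume x: "1 \<le> \<bar>x\<bar>"
  hence "x \<noteq> 0" by auto
  have a: "\<bar>cos (x^2) / x^2\<bar> \<le> 1" by (rule div_le1) (use x pow_ge1[of x 2] in auto)
  have b: "\<bar>sin (x^2) / x^4\<bar> \<le> 1" by (rule div_le1) (use x pow_ge1[of x 4] in auto)
  have c: "\<bar>sin (x^2)\<bar> \<le> 1" by simp
  have "\<bar>G2 x\<bar> \<le> 16" unfolding G2_def using a b c by (simp add: abs_le_iff; linarith)
  thus "\<bar>Fk 2 x\<bar> \<le> 16" using F2_eq[OF \<open>x \<noteq> 0\<close>] by simp
qed

lemma lipschitz_real: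
  assumes d: "\<And>x. (f has_real_derivative f' x) (at x)" and b: "\<And>x. \<bar>f' x\<bar> \<le> L"
  shows "\<bar>f x - f y\<bar> \<le> L * \<bar>x - y\<bar>"
proof -
  have *: "\<bar>f b - f a\<bar> \<le> L * \<bar>b - a\<bar>" if ab: "a < b" for a b
  proof -
    obtain z where "f b - f a = (b - a) * f' z"
      using MVT2[OF ab, of f f'] d by metis
    hence "\<bar>f b - f a\<bar> = \<bar>b - a\<bar> * \<bar>f' z\<bar>" by (simp add: abs_mult)
    also have "\<dots> \<le> \<bar>b - a\<bar> * L" by (rule mult_left_mono[OF b]) simp
    finally show ?thesis by (simp add: mult.commute)
  qed
  consider "x < y" | "x = y" | "y < x" by linarith
  thus ?thesis
  proof cases
    case 1 thus ?thesis using *[OF 1] by (simp add: abs_minus_commute)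
  next
    case 2 thus ?thesis by simp
  next
    case 3 thus ?thesis using *[OF 3] by simp
  qed
qed

lemma G3_unbounded: "\<exists>x. \<bar>Fk 3 x\<bar> > M"
proof -
  obtain n :: nat where n: "(\<bar>M\<bar> + 24)^2 < real n" using reals_Archimedean2 by blast
  define x where "x = sqrt (2 * pi * real n)"
  have "1 * real n \<le> (2 * pi) * real n" using pi_gt3 by (intro mult_right_mono) auto
  hence "sqrt (real n) \<le> x" unfolding x_def by simp
  moreover have "\<bar>M\<bar> + 24 < sqrt (real n)"
    using n by (metis abs_ge_zero add_nonneg_nonneg real_less_rsqrt zero_le_numeral)
  ultimately have x1: "\<bar>M\<bar> + 24 < x" by linarith
  have xx: "x^2 = 2 * pi * real n" unfolding x_def by simp
  have s: "sin (x^2) = 0" unfolding xx using sin_int_2pin[of "int n"] by simp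
  have c: "cos (x^2) = 1" unfolding xx using cos_int_2pin[of "int n"] by simp
  have x0: "x \<noteq> 0" "1 \<le> x" using x1 by auto
  have "Fk 3 x = -8 * x + 24 / x^3" using F3_eq[OF x0(1)] s c by (simp add: G3_def)
  moreover have "24 / x^3 \<le> 24" using x0 pow_ge1[of x 3] by (simp add: divide_le_eq)
  moreover have "0 \<le> 24 / x^3" using x0 by simp
  moreover have "M \<le> \<bar>M\<bar>" by simp
  ultimately have "- Fk 3 x > M" using x1 by linarith
  hence "\<bar>Fk 3 x\<bar> > M" by linarith
  thus ?thesis by blast
qed




lemma FF_cont': "continuous_on UNIV (\<lambda>p::real\<times>real. FF (fst p))"
  by (intro continuous_on_compose2[OF Fk_cont[of UNIV 0]] continuous_intros) auto

lemma Omega2_eq: "Omega2 = {p. snd p < FF (fst p)}"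
  unfolding Omega2_def by auto (metis FF_0 FF_eq)+

lemma Omega2_open: "open Omega2"
  unfolding Omega2_eq by (rule open_Collect_less[OF continuous_on_snd[OF continuous_on_id] FF_cont'])

lemma Omega2_closure: "closure Omega2 = {p. snd p \<le> FF (fst p)}"
proof
  show "closure Omega2 \<subseteq> {p. snd p \<le> FF (fst p)}"
    by (rule closure_minimal) (auto simp: Omega2_eq intro!: closed_Collect_le[OF continuous_on_snd[OF continuous_on_id] FF_cont'])
  show "{p. snd p \<le> FF (fst p)} \<subseteq> closure Omega2"
  proof
    fix p :: "real \<times> real" assume p: "p \<in> {p. snd p \<le> FF (fst p)}"
    show "p \<in> closure Omega2" unfolding closure_approachable
    proof (intro allI impI)
      fix e :: real assume e: "0 < e"
      have "(fst p, snd p - e/2) \<in> Omega2" using p e by (auto simp: Omega2_eq)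
      moreover have "dist (fst p, snd p - e/2) p < e"
        using e by (cases p) (simp add: dist_Pair_Pair dist_real_def)
      ultimately show "\<exists>y\<in>Omega2. dist y p < e" by blast
    qed
  qed
qed

lemma Omega2_frontier: "frontier Omega2 = {p. snd p = FF (fst p)}"
  unfolding frontier_def Omega2_closure interior_open[OF Omega2_open]
  by (auto simp: Omega2_eq)

lemma Omega2_connected: "connected Omega2"
proof -
  have "Omega2 = (\<lambda>q. (fst q, FF (fst q) - snd q)) ` (UNIV \<times> {0<..})"
  proof
    show "Omega2 \<subseteq> (\<lambda>q. (fst q, FF (fst q) - snd q)) ` (UNIV \<times> {0<..})"
    proof
      fix p assume "p \<in> Omega2"
      hence "(fst p, FF (fst p) - snd p) \<in> UNIV \<times> {0<..}" by (auto simp: Omega2_eq)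
      moreover have "p = (\<lambda>q. (fst q, FF (fst q) - snd q)) (fst p, FF (fst p) - snd p)" by simp
      ultimately show "p \<in> (\<lambda>q. (fst q, FF (fst q) - snd q)) ` (UNIV \<times> {0<..})" by blast
    qed
    show "(\<lambda>q. (fst q, FF (fst q) - snd q)) ` (UNIV \<times> {0<..}) \<subseteq> Omega2"
      by (auto simp: Omega2_eq)
  qed
  moreover have "connected (UNIV \<times> {0<..} :: (real \<times> real) set)"
    by (intro convex_connected convex_Times) auto
  moreover have "continuous_on (UNIV \<times> {0<..}) (\<lambda>q::real\<times>real. (fst q, FF (fst q) - snd q))"
    using FF_cont' by (intro continuous_intros) (auto intro: continuous_on_subset)
  ultimately show ?thesis using connected_continuous_image by metis
qed




definition cf :: "real \<Rightarrow> real \<Rightarrow> real \<Rightarrow> nat \<Rightarrow> real \<times> real \<Rightarrow> real" where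
  "cf a b e k = (\<lambda>p. a * snd p + b + e * Fk k (fst p))"

lemma D1_cf: "D1 (cf a b e k) = cf 0 0 e (Suc k)"
proof
  fix p :: "real \<times> real"
  have "((\<lambda>t. a * snd p + b + e * Fk k t) has_real_derivative e * Fk (Suc k) (fst p)) (at (fst p))"
    by (rule derivative_eq_intros Fk_deriv refl | simp)+
  thus "D1 (cf a b e k) p = cf 0 0 e (Suc k) p"
    unfolding D1_def cf_def by (simp add: DERIV_imp_deriv)
qed

lemma D2_cf: "D2 (cf a b e k) = cf 0 a 0 k"
proof
  fix p :: "real \<times> real"
  have "((\<lambda>t. a * t + b + e * Fk k (fst p)) has_real_derivative a) (at (snd p))"
    by (rule derivative_eq_intros refl | simp)+
  thus "D2 (cf a b e k) p = cf 0 a 0 k p"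
    unfolding D2_def cf_def by (simp add: DERIV_imp_deriv)
qed

lemma Cm_cf: "Cm m U (cf a b e k)"
proof (induction m arbitrary: a b e k)
  case 0
  show ?case unfolding cf_def
    by (simp, intro continuous_intros continuous_on_compose2[OF Fk_cont[of UNIV k]]) auto
next
  case (Suc m)
  have c: "continuous_on U (cf a b e k)" unfolding cf_def
    by (intro continuous_intros continuous_on_compose2[OF Fk_cont[of UNIV k]]) auto
  have d: "\<forall>p\<in>U. (\<lambda>t. cf a b e k (t, snd p)) differentiable (at (fst p)) \<and>
              (\<lambda>t. cf a b e k (fst p, t)) differentiable (at (snd p))"
  proof
    fix p :: "real\<times>real"
    have "((\<lambda>t. a * snd p + b + e * Fk k t) has_real_derivative e * Fk (Suc k) (fst p)) (at (fst p))"
      by (rule derivative_eq_intros Fk_deriv refl | simp)+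
    moreover have "((\<lambda>t. a * t + b + e * Fk k (fst p)) has_real_derivative a) (at (snd p))"
      by (rule derivative_eq_intros refl | simp)+
    ultimately show "(\<lambda>t. cf a b e k (t, snd p)) differentiable (at (fst p)) \<and>
              (\<lambda>t. cf a b e k (fst p, t)) differentiable (at (snd p))"
      unfolding cf_def using real_differentiable_def by auto
  qed
  show ?case by (rule iffD2[OF Cm.simps(2)]) (use c d Suc.IH in \<open>simp only: D1_cf D2_cf\<close>)
qed

lemma pderivs_finite: "finite (pderivs m f)"
  by (induction m arbitrary: f) auto

lemma self_in_pderivs: "f \<in> pderivs m f"
  by (cases m) auto

lemma Cm_Suc_imp: "Cm (Suc m) U f \<Longrightarrow> Cm m U f"
proof (induction m arbitrary: f)
  case 0 thus ?case by simp
next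
  case (Suc m f)
  have h: "continuous_on U f \<and>
      (\<forall>p\<in>U. (\<lambda>t. f (t, snd p)) differentiable (at (fst p)) \<and>
              (\<lambda>t. f (fst p, t)) differentiable (at (snd p))) \<and>
      Cm (Suc m) U (D1 f) \<and> Cm (Suc m) U (D2 f)"
    using Suc.prems by (rule iffD1[OF Cm.simps(2)[of "Suc m"]])
  show ?case
    by (rule iffD2[OF Cm.simps(2)[of m]]) (use h Suc.IH in blast)
qed

definition bandU :: "(real \<times> real) set" where
  "bandU = {p. \<bar>snd p - FF (fst p)\<bar> < 1}"

definition rho0 :: "real \<times> real \<Rightarrow> real" where "rho0 = cf 1 0 (-1) 0"

lemma rho0_eq: "rho0 p = snd p - FF (fst p)"
  by (simp add: rho0_def cf_def)

lemma bandU_open: "open bandU"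
proof -
  have "continuous_on UNIV (\<lambda>p::real\<times>real. \<bar>snd p - FF (fst p)\<bar>)"
    using FF_cont' by (intro continuous_intros) auto
  thus ?thesis unfolding bandU_def by (intro open_Collect_less) auto
qed

lemma bandU_frontier: "frontier bandU \<subseteq> {p. \<bar>snd p - FF (fst p)\<bar> = 1}"
proof -
  have "continuous_on UNIV (\<lambda>p::real\<times>real. \<bar>snd p - FF (fst p)\<bar>)"
    using FF_cont' by (intro continuous_intros) auto
  hence "closed {p::real\<times>real. \<bar>snd p - FF (fst p)\<bar> \<le> 1}"
    by (intro closed_Collect_le) auto
  hence "closure bandU \<subseteq> {p. \<bar>snd p - FF (fst p)\<bar> \<le> 1}"
    by (intro closure_minimal) (auto simp: bandU_def)
  thus ?thesis unfolding frontier_def interior_open[OF bandU_open] by (auto simp: bandU_def)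
qed

lemma grad_rho0: "grad rho0 p = (- Fk 1 (fst p), 1)"
  unfolding grad_def rho0_def D1_cf D2_cf by (simp add: cf_def)

lemma rho0_defining: "defining_function m Omega2 bandU rho0"
  unfolding defining_function_def
proof (intro conjI)
  show "open bandU" by (rule bandU_open)
  show "frontier Omega2 \<subseteq> bandU" by (auto simp: Omega2_frontier bandU_def)
  show "Cm m bandU rho0" unfolding rho0_def by (rule Cm_cf)
  show "{p \<in> bandU. rho0 p < 0} = Omega2 \<inter> bandU" by (auto simp: Omega2_eq rho0_eq)
  show "\<forall>p\<in>frontier Omega2. grad rho0 p \<noteq> 0" by (simp add: grad_rho0 zero_prod_def)
qed

lemma rho0_uniform: "uniform_defining_function 2 Omega2 bandU rho0"
  unfolding uniform_defining_function_def
proof (intro conjI)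
  show "defining_function 2 Omega2 bandU rho0" by (rule rho0_defining)
  obtain L where L: "\<And>x. \<bar>Fk 1 x\<bar> \<le> L" using F1_bound by blast
  obtain K where K: "\<And>x. \<bar>Fk 2 x\<bar> \<le> K" using F2_bound by blast
  have L0: "0 \<le> L" using L[of 0] by linarith
  have lip: "\<bar>FF x - FF y\<bar> \<le> L * \<bar>x - y\<bar>" for x y
    by (rule lipschitz_real[of FF "Fk 1"]) (use Fk_deriv[of 0] L in auto)
  show "\<exists>\<delta>>0. \<forall>a\<in>frontier Omega2. \<forall>b\<in>frontier bandU. \<delta> \<le> dist a b"
  proof (intro exI[of _ "1/(1+L)"] conjI ballI)
    show "0 < 1/(1+L)" using L0 by simp
    fix a b assume a: "a \<in> frontier Omega2" and b: "b \<in> frontier bandU"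
    have a2: "snd a = FF (fst a)" using a by (simp add: Omega2_frontier)
    have b2: "\<bar>snd b - FF (fst b)\<bar> = 1" using b bandU_frontier by auto
    have d1: "\<bar>fst a - fst b\<bar> \<le> dist a b" using dist_fst_le[of a b] by (simp add: dist_real_def)
    have d2: "\<bar>snd a - snd b\<bar> \<le> dist a b" using dist_snd_le[of a b] by (simp add: dist_real_def)
    show "1/(1+L) \<le> dist a b"
    proof (cases "1/(1+L) \<le> \<bar>fst a - fst b\<bar>")
      case True thus ?thesis using d1 by linarith
    next
      case False
      hence "L * \<bar>fst a - fst b\<bar> \<le> L * (1/(1+L))" using L0 by (intro mult_left_mono) auto
      moreover have "\<bar>FF (fst a) - FF (fst b)\<bar> \<le> L * \<bar>fst a - fst b\<bar>" by (rule lip)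
      moreover have "L * (1/(1+L)) = 1 - 1/(1+L)" using L0 by (simp add: field_simps)
      ultimately have "1/(1+L) \<le> \<bar>snd a - snd b\<bar>" using a2 b2 by linarith
      thus ?thesis using d2 by linarith
    qed
  qed
  show "\<exists>B. \<forall>p\<in>bandU. (\<Sum>g\<in>pderivs 2 rho0. \<bar>g p\<bar>) \<le> B"
  proof (intro exI ballI)
    fix p assume p: "p \<in> bandU"
    have K0: "0 \<le> K" using K[of 0] by linarith
    have e: "pderivs 2 rho0 = {cf 1 0 (-1) 0, cf 0 0 (-1) 1, cf 0 0 (-1) 2, cf 0 0 0 1,
        cf 0 1 0 0, cf 0 0 0 0}"
      unfolding rho0_def by (simp add: numeral_2_eq_2 D1_cf D2_cf) blast
    have "\<bar>cf 1 0 (-1) 0 p\<bar> \<le> 1 + L + K" using p L0 K0 by (simp add: cf_def bandU_def)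
    moreover have "\<bar>cf 0 0 (-1) 1 p\<bar> \<le> 1 + L + K" using L[of "fst p"] K0 by (simp add: cf_def)
    moreover have "\<bar>cf 0 0 (-1) 2 p\<bar> \<le> 1 + L + K" using K[of "fst p"] L0 by (simp add: cf_def)
    moreover have "\<bar>cf 0 0 0 k p\<bar> \<le> 1 + L + K" for k using L0 K0 by (simp add: cf_def)
    moreover have "\<bar>cf 0 1 0 0 p\<bar> \<le> 1 + L + K" using L0 K0 by (simp add: cf_def)
    ultimately have "\<forall>g\<in>pderivs 2 rho0. \<bar>g p\<bar> \<le> 1 + L + K"
      unfolding e by blast
    hence "(\<Sum>g\<in>pderivs 2 rho0. \<bar>g p\<bar>) \<le> of_nat (card (pderivs 2 rho0)) * (1 + L + K)"
      by (intro sum_bounded_above) auto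
    thus "(\<Sum>g\<in>pderivs 2 rho0. \<bar>g p\<bar>) \<le> of_nat (card (pderivs 2 rho0)) * (1 + L + K)" .
  qed
  show "\<exists>c>0. \<forall>p\<in>bandU. c \<le> norm (grad rho0 p)"
  proof (intro exI[of _ 1] conjI ballI)
    fix p :: "real \<times> real"
    show "1 \<le> norm (grad rho0 p)" unfolding grad_rho0 norm_Pair by simp
  qed simp
qed




lemma two_min:
  fixes px py t1 t2 d L K :: real
  assumes L: "\<And>x. \<bar>Fk 1 x\<bar> \<le> L" and K: "\<And>x. \<bar>Fk 2 x\<bar> \<le> K"
    and L0: "0 \<le> L" and K0: "0 \<le> K"
    and t12: "t1 < t2"
    and m1: "\<And>t. (t1 - px)^2 + (FF t1 - py)^2 \<le> (t - px)^2 + (FF t - py)^2"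
    and m2: "\<And>t. (t2 - px)^2 + (FF t2 - py)^2 \<le> (t - px)^2 + (FF t - py)^2"
    and c1: "\<bar>t1 - px\<bar> \<le> d" and c2: "\<bar>FF t1 - py\<bar> \<le> d" and c3: "\<bar>t2 - px\<bar> \<le> d"
    and dsmall: "d * (1 + 2*L) * (2*(K+1)) < 1"
  shows False
proof -
  define \<phi> where "\<phi> t = (t - px)^2 + (FF t - py)^2" for t
  define \<phi>1 where "\<phi>1 t = 2*(t - px) + 2*(FF t - py) * Fk 1 t" for t
  define \<phi>2 where "\<phi>2 t = 2 + 2*(Fk 1 t)^2 + 2*(FF t - py) * Fk 2 t" for t
  have dF: "\<And>k x. (Fk k has_real_derivative Fk (Suc k) x) (at x)" by (rule Fk_deriv)
  have d1: "(\<phi> has_real_derivative \<phi>1 t) (at t)" for t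
    unfolding \<phi>_def[abs_def] \<phi>1_def
    by (rule derivative_eq_intros dF refl | simp)+
  have d2: "(\<phi>1 has_real_derivative \<phi>2 t) (at t)" for t
    unfolding \<phi>1_def[abs_def] \<phi>2_def
    by (rule derivative_eq_intros dF[of 0] dF[of 1] refl | simp)+ (simp add: algebra_simps numeral_2_eq_2 power2_eq_square)
  have z1: "\<phi>1 t1 = 0"
    by (rule DERIV_local_min[OF d1 zero_less_one]) (use m1 in \<open>simp add: \<phi>_def\<close>)
  have z2: "\<phi>1 t2 = 0"
    by (rule DERIV_local_min[OF d1 zero_less_one]) (use m2 in \<open>simp add: \<phi>_def\<close>)
  obtain \<xi> where \<xi>: "t1 < \<xi>" "\<xi> < t2" "\<phi>1 t2 - \<phi>1 t1 = (t2 - t1) * \<phi>2 \<xi>"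
    using MVT2[OF t12, of \<phi>1 \<phi>2] d2 by metis
  hence "\<phi>2 \<xi> = 0" using z1 z2 t12 by simp
  moreover have "\<phi>2 \<xi> > 0"
  proof -
    have lip: "\<bar>FF \<xi> - FF t1\<bar> \<le> L * \<bar>\<xi> - t1\<bar>"
      by (rule lipschitz_real[of FF "Fk 1"]) (use Fk_deriv[of 0] L in auto)
    have "\<bar>\<xi> - t1\<bar> \<le> 2 * d" using \<xi> c1 c3 by linarith
    hence "L * \<bar>\<xi> - t1\<bar> \<le> L * (2*d)" using L0 by (simp add: mult_left_mono)
    hence A: "\<bar>FF \<xi> - py\<bar> \<le> d * (1 + 2*L)" using lip c2 by (simp add: algebra_simps; linarith)
    have "\<bar>(FF \<xi> - py) * Fk 2 \<xi>\<bar> \<le> d * (1 + 2*L) * K"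
      unfolding abs_mult by (rule mult_mono[OF A K]) (use c1 L0 in auto)
    moreover have "d * (1 + 2*L) * K < 1/2"
    proof -
      have d0: "0 \<le> d" using c1 by linarith
      have "d * (1 + 2*L) * K \<le> d * (1 + 2*L) * (K+1)" using d0 L0 by (intro mult_left_mono) auto
      thus ?thesis using dsmall by linarith
    qed
    ultimately have "\<bar>(FF \<xi> - py) * Fk 2 \<xi>\<bar> < 1/2" by linarith
    hence "2 * ((FF \<xi> - py) * Fk 2 \<xi>) > -1" by linarith
    moreover have "0 \<le> 2*(Fk 1 \<xi>)^2" by simp
    ultimately show ?thesis unfolding \<phi>2_def by linarith
  qed
  ultimately show False by simp
qed

lemma dist_graph: "dist p (t, FF t) = sqrt ((t - fst p)^2 + (FF t - snd p)^2)"
  by (cases p) (simp add: dist_Pair_Pair dist_real_def power2_commute)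

lemma reach_pos: "reach (frontier Omega2) > 0"
proof -
  define S where "S = frontier Omega2"
  have S: "S = {p. snd p = FF (fst p)}" unfolding S_def by (rule Omega2_frontier)
  obtain L where L: "\<And>x. \<bar>Fk 1 x\<bar> \<le> L" using F1_bound by blast
  obtain K where K: "\<And>x. \<bar>Fk 2 x\<bar> \<le> K" using F2_bound by blast
  have L0: "0 \<le> L" using L[of 0] by linarith
  have K0: "0 \<le> K" using K[of 0] by linarith
  define r0 where "r0 = 1 / ((1 + 2*L) * (2*(K+1)))"
  have pos: "0 < (1 + 2*L) * (2*(K+1))" using L0 K0 by simp
  have r0: "0 < r0" unfolding r0_def using pos by simp
  have closedS: "closed S" unfolding S
    by (rule closed_Collect_eq[OF continuous_on_snd[OF continuous_on_id] FF_cont'])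
  have key: "ball y r0 \<subseteq> Unp S" if y: "y \<in> S" for y
  proof
    fix p assume "p \<in> ball y r0"
    hence py: "dist p y < r0" by (simp add: dist_commute)
    obtain q where q: "q \<in> S" "\<And>z. z \<in> S \<Longrightarrow> dist p q \<le> dist p z"
      using distance_attains_inf[OF closedS] y by blast
    have dq: "dist p q < r0" using q(2)[OF y] py by linarith
    show "p \<in> Unp S" unfolding Unp_def
    proof (intro CollectI ex1I[of _ q] conjI ballI)
      show "q \<in> S" by (rule q(1))
      show "\<And>z. z \<in> S \<Longrightarrow> dist p q \<le> dist p z" by (rule q(2))
      fix q' assume q': "q' \<in> S \<and> (\<forall>z\<in>S. dist p q' \<le> dist p z)"
      define t1 where "t1 = fst q"
      define t2 where "t2 = fst q'"
      have qe: "q = (t1, FF t1)" using q(1) unfolding S t1_def by (cases q) auto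
      have qe': "q' = (t2, FF t2)" using q' unfolding S t2_def by (cases q') auto
      have eqd: "dist p q' = dist p q" using q' q by (meson order_antisym)
      have mins: "(ta - fst p)^2 + (FF ta - snd p)^2 \<le> (t - fst p)^2 + (FF t - snd p)^2"
        if "ta = t1 \<or> ta = t2" for ta t
      proof -
        have "(t, FF t) \<in> S" unfolding S by simp
        hence "dist p (ta, FF ta) \<le> dist p (t, FF t)"
          using that q(2) q' qe qe' eqd by (metis)
        thus ?thesis unfolding dist_graph by simp
      qed
      have cc: "\<bar>ta - fst p\<bar> \<le> dist p q \<and> \<bar>FF ta - snd p\<bar> \<le> dist p q" if "ta = t1 \<or> ta = t2" for ta
      proof -
        have "dist p (ta, FF ta) = dist p q" using that qe qe' eqd by auto
        moreover have "\<bar>ta - fst p\<bar> \<le> dist p (ta, FF ta)" "\<bar>FF ta - snd p\<bar> \<le> dist p (ta, FF ta)"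
          using dist_fst_le[of p "(ta, FF ta)"] dist_snd_le[of p "(ta, FF ta)"]
          by (simp_all add: dist_real_def abs_minus_commute)
        ultimately show ?thesis by simp
      qed
      have ds: "dist p q * (1 + 2*L) * (2*(K+1)) < 1"
        using dq pos unfolding r0_def by (simp add: field_simps)
      have "\<not> t1 < t2"
        using two_min[OF L K L0 K0, of t1 t2 "fst p" "snd p" "dist p q"] mins cc ds by blast
      moreover have "\<not> t2 < t1"
        using two_min[OF L K L0 K0, of t2 t1 "fst p" "snd p" "dist p q"] mins cc ds by blast
      ultimately have "t1 = t2" by linarith
      thus "q' = q" using qe qe' by simp
    qed
  qed
  have "ereal r0 \<le> reach S" unfolding reach_def
  proof (rule INF_greatest)
    fix y assume "y \<in> S"
    hence "r0 \<in> {r. 0 \<le> r \<and> ball y r \<subseteq> Unp S}" using key r0 by auto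
    thus "ereal r0 \<le> (SUP r\<in>{r. 0 \<le> r \<and> ball y r \<subseteq> Unp S}. ereal r)" by (rule SUP_upper)
  qed
  thus ?thesis using r0 unfolding S_def by (metis ereal_less(2) order_less_le_trans)
qed




lemma cont_eps:
  assumes "isCont f a" "0 < r"
  shows "\<exists>s>0. \<forall>x. dist x a < s \<longrightarrow> dist (f x) (f a) < r"
proof -
  obtain s where s: "s > 0" "\<forall>x. x \<noteq> a \<and> dist x a < s \<longrightarrow> dist (f x) (f a) < r"
    using metric_LIM_D[OF assms(1)[unfolded isCont_def] assms(2)] by blast
  show ?thesis using s assms(2) by (metis dist_self)
qed

lemma chain_curve:
  assumes U: "open U" and h: "Cm 1 U h" and inU: "(x0, FF x0) \<in> U"
  shows "((\<lambda>x. h (x, FF x)) has_real_derivative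
           D1 h (x0, FF x0) + D2 h (x0, FF x0) * Fk 1 x0) (at x0)"
proof -
  define p0 where "p0 = (x0, FF x0)"
  have hd: "\<forall>p\<in>U. (\<lambda>t. h (t, snd p)) differentiable (at (fst p)) \<and>
              (\<lambda>t. h (fst p, t)) differentiable (at (snd p))"
    and hc: "continuous_on U (D1 h)"
    using h by (simp_all add: numeral_2_eq_2)
  have dFF: "(FF has_real_derivative Fk 1 x0) (at x0)" using Fk_deriv[of 0 x0] by simp
  have k: "((\<lambda>x. h (x0, FF x)) has_real_derivative D2 h p0 * Fk 1 x0) (at x0)"
  proof (rule DERIV_chain2[OF _ dFF, of "\<lambda>t. h (x0, t)"])
    have "(\<lambda>t. h (x0, t)) differentiable (at (FF x0))" using hd inU by auto
    thus "((\<lambda>t. h (x0, t)) has_real_derivative D2 h p0) (at (FF x0))"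
      unfolding D2_def p0_def using DERIV_deriv_iff_real_differentiable by auto
  qed
  define r where "r x = h (x, FF x) - h (x0, FF x)" for x
  have rdiff: "(r has_real_derivative D1 h p0) (at x0)"
    unfolding has_field_derivative_iff
  proof (rule metric_LIM_I)
    fix e :: real assume e: "0 < e"
    have ic: "isCont (D1 h) p0" using hc U inU unfolding p0_def
      by (simp add: continuous_on_eq_continuous_at)
    obtain d1 where d1: "d1 > 0" "\<forall>p. dist p p0 < d1 \<longrightarrow> dist (D1 h p) (D1 h p0) < e"
      using cont_eps[OF ic e] by blast
    obtain d3 where d3: "d3 > 0" "ball p0 d3 \<subseteq> U" using U inU openE unfolding p0_def by blast
    define d where "d = min d1 d3"
    have d: "d > 0" using d1 d3 by (simp add: d_def)
    have icF: "isCont FF x0" using DERIV_isCont[OF dFF] .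
    obtain d2 where d2: "d2 > 0" "\<forall>x. dist x x0 < d2 \<longrightarrow> dist (FF x) (FF x0) < d/2"
      using cont_eps[OF icF, of "d/2"] d by auto
    define s where "s = min (d/2) d2"
    have s: "s > 0" using d d2 by (simp add: s_def)
    show "\<exists>s>0. \<forall>x. x \<noteq> x0 \<and> dist x x0 < s \<longrightarrow>
            dist ((r x - r x0) / (x - x0)) (D1 h p0) < e"
    proof (intro exI[of _ s] conjI allI impI s)
      fix x assume x: "x \<noteq> x0 \<and> dist x x0 < s"
      have Fx: "\<bar>FF x - FF x0\<bar> < d/2" using d2 x by (simp add: s_def dist_real_def)
      have near: "dist (t, FF x) p0 < d" "(t, FF x) \<in> U" "\<bar>D1 h (t, FF x) - D1 h p0\<bar> < e"
        if t: "\<bar>t - x0\<bar> \<le> \<bar>x - x0\<bar>" for t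
      proof -
        have "dist (t, FF x) p0 \<le> \<bar>t - x0\<bar> + \<bar>FF x - FF x0\<bar>"
          unfolding p0_def dist_Pair_Pair dist_real_def
          using sqrt_sum_squares_le_sum_abs[of "t - x0" "FF x - FF x0"] by simp
        moreover have "\<bar>x - x0\<bar> < d/2" using x by (simp add: s_def dist_real_def)
        ultimately show dd: "dist (t, FF x) p0 < d" using t Fx by linarith
        show "(t, FF x) \<in> U" using dd d3 by (auto simp: d_def dist_commute)
        show "\<bar>D1 h (t, FF x) - D1 h p0\<bar> < e" using dd d1 by (simp add: d_def dist_real_def)
      qed
      have gd: "((\<lambda>t. h (t, FF x)) has_real_derivative D1 h (t, FF x)) (at t)"
        if t: "\<bar>t - x0\<bar> \<le> \<bar>x - x0\<bar>" for t
      proof -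
        have "(\<lambda>t'. h (t', FF x)) differentiable (at t)" using hd near(2)[OF t] by force
        thus ?thesis unfolding D1_def using DERIV_deriv_iff_real_differentiable by auto
      qed
      obtain \<xi> where \<xi>: "\<bar>\<xi> - x0\<bar> \<le> \<bar>x - x0\<bar>" "r x = (x - x0) * D1 h (\<xi>, FF x)"
      proof (cases "x0 < x")
        case True
        obtain z where z: "x0 < z" "z < x" "h (x, FF x) - h (x0, FF x) = (x - x0) * D1 h (z, FF x)"
          using MVT2[OF True, of "\<lambda>t. h (t, FF x)" "\<lambda>t. D1 h (t, FF x)"] gd True by force
        show ?thesis by (rule that[of z]) (use z in \<open>auto simp: r_def\<close>)
      next
        case False
        hence F: "x < x0" using x by linarith
        obtain z where z: "x < z" "z < x0" "h (x0, FF x) - h (x, FF x) = (x0 - x) * D1 h (z, FF x)"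
          using MVT2[OF F, of "\<lambda>t. h (t, FF x)" "\<lambda>t. D1 h (t, FF x)"] gd F by force
        show ?thesis by (rule that[of z]) (use z in \<open>auto simp: r_def algebra_simps\<close>)
      qed
      have "r x0 = 0" by (simp add: r_def)
      hence "(r x - r x0) / (x - x0) = D1 h (\<xi>, FF x)" using \<xi>(2) x by simp
      thus "dist ((r x - r x0) / (x - x0)) (D1 h p0) < e"
        using near(3)[OF \<xi>(1)] by (simp add: dist_real_def)
    qed
  qed
  have "((\<lambda>x. r x + h (x0, FF x)) has_real_derivative D1 h p0 + D2 h p0 * Fk 1 x0) (at x0)"
    by (rule DERIV_add[OF rdiff k])
  thus ?thesis unfolding r_def p0_def by simp
qed




lemma abs_mult_le: "\<bar>u::real\<bar> \<le> M \<Longrightarrow> \<bar>v\<bar> \<le> N \<Longrightarrow> \<bar>u * v\<bar> \<le> M * N"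
  unfolding abs_mult by (rule mult_mono) auto

lemma Cm_unfold: "Cm (Suc m) U f \<Longrightarrow> continuous_on U f \<and> Cm m U (D1 f) \<and> Cm m U (D2 f)"
  by (drule iffD1[OF Cm.simps(2)]) blast

lemma lin1: "\<bar>u::real\<bar> \<le> B \<Longrightarrow> \<bar>v\<bar> \<le> B \<Longrightarrow> \<bar>P\<bar> \<le> L \<Longrightarrow> \<bar>u + v * P\<bar> \<le> B + B * L"
  using abs_mult_le[of v B P L] by linarith

lemma sum6: "X1 + (X2 + X3) + (X4 + X5) + (X6 + Y) = (0::real) \<Longrightarrow>
   \<bar>Y\<bar> \<le> \<bar>X1\<bar> + \<bar>X2\<bar> + \<bar>X3\<bar> + \<bar>X4\<bar> + \<bar>X5\<bar> + \<bar>X6\<bar>"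
  by arith

lemma no_uniform3: "\<not> (\<exists>U \<rho>. uniform_defining_function 3 Omega2 U \<rho>)"
proof
  assume "\<exists>U \<rho>. uniform_defining_function 3 Omega2 U \<rho>"
  then obtain U \<rho> where u: "uniform_defining_function 3 Omega2 U \<rho>" by blast
  have U: "open U" and fU: "frontier Omega2 \<subseteq> U" and C3: "Cm 3 U \<rho>"
    and neg: "{p \<in> U. \<rho> p < 0} = Omega2 \<inter> U"
    using u by (auto simp: uniform_defining_function_def defining_function_def)
  obtain B where B: "\<And>p. p \<in> U \<Longrightarrow> (\<Sum>g\<in>pderivs 3 \<rho>. \<bar>g p\<bar>) \<le> B"
    using u by (auto simp: uniform_defining_function_def)
  obtain c where c: "c > 0" "\<And>p. p \<in> U \<Longrightarrow> c \<le> norm (grad \<rho> p)"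
    using u by (auto simp: uniform_defining_function_def)
  obtain L where L: "\<And>x. \<bar>Fk 1 x\<bar> \<le> L" using F1_bound by blast
  obtain K where K: "\<And>x. \<bar>Fk 2 x\<bar> \<le> K" using F2_bound by blast
  have L0: "0 \<le> L" using L[of 0] by linarith
  have K0: "0 \<le> K" using K[of 0] by linarith
  have inU: "(x, FF x) \<in> U" for x using fU by (auto simp: Omega2_frontier)
  have gb: "\<bar>g (x, FF x)\<bar> \<le> B" if "g \<in> pderivs 3 \<rho>" for g x
  proof -
    have "\<bar>g (x, FF x)\<bar> \<le> (\<Sum>g\<in>pderivs 3 \<rho>. \<bar>g (x, FF x)\<bar>)"
      by (rule member_le_sum[OF that]) (auto simp: pderivs_finite)
    thus ?thesis using B[OF inU[of x]] by linarith
  qed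
  define a where "a = D1 \<rho>"
  define b where "b = D2 \<rho>"
  define a1 where "a1 = D1 a"
  define a2 where "a2 = D2 a"
  define b1 where "b1 = D1 b"
  define b2 where "b2 = D2 b"
  have c3: "continuous_on U \<rho>" "Cm 2 U a" "Cm 2 U b"
    using Cm_unfold[of 2 U \<rho>] C3 by (simp_all add: numeral_3_eq_3 numeral_2_eq_2 a_def b_def)
  have c2: "Cm 1 U a1" "Cm 1 U a2" "Cm 1 U b1" "Cm 1 U b2"
    using Cm_unfold[of 1 U a] Cm_unfold[of 1 U b] c3
    by (simp_all add: numeral_2_eq_2 a1_def a2_def b1_def b2_def)
  have c1: "Cm 1 U \<rho>" "Cm 1 U a" "Cm 1 U b"
    using Cm_Suc_imp[of 2 U \<rho>] Cm_Suc_imp[of 1 U \<rho>] C3 c3 Cm_Suc_imp[of 1 U a] Cm_Suc_imp[of 1 U b]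
    by (simp_all add: numeral_3_eq_3 numeral_2_eq_2)
  note ch = chain_curve[OF U _ inU]
  have dP: "(Fk 1 has_real_derivative Fk 2 x) (at x)" for x
    using Fk_deriv[of 1 x] by (simp add: numeral_2_eq_2)
  have z0: "\<rho> (x, FF x) = 0" for x
  proof (rule ccontr)
    assume ne: "\<rho> (x, FF x) \<noteq> 0"
    have "(x, FF x) \<notin> Omega2" by (simp add: Omega2_eq)
    have ge: "\<rho> (x, FF x) \<ge> 0"
    proof (rule ccontr)
      assume "\<not> \<rho> (x, FF x) \<ge> 0"
      hence "(x, FF x) \<in> {p \<in> U. \<rho> p < 0}" using inU[of x] by simp
      hence "(x, FF x) \<in> Omega2" using neg by blast
      thus False using \<open>(x, FF x) \<notin> Omega2\<close> by blast
    qed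
    hence pos: "\<rho> (x, FF x) > 0" using ne by simp
    have ic: "isCont \<rho> (x, FF x)" using c3(1) U inU by (simp add: continuous_on_eq_continuous_at)
    obtain d1 where d1: "d1 > 0" "\<forall>p. dist p (x, FF x) < d1 \<longrightarrow> dist (\<rho> p) (\<rho> (x, FF x)) < \<rho> (x, FF x)"
      using cont_eps[OF ic pos] by blast
    obtain d2 where d2: "d2 > 0" "ball (x, FF x) d2 \<subseteq> U" using U inU openE by blast
    define q where "q = (x, FF x - min d1 d2 / 2)"
    have dq: "dist q (x, FF x) < d1" "dist q (x, FF x) < d2"
      using d1 d2 by (simp_all add: q_def dist_Pair_Pair dist_real_def)
    have "q \<in> U" using dq d2 by (auto simp: dist_commute)
    moreover have "q \<in> Omega2" using d1 d2 by (simp add: q_def Omega2_eq)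
    ultimately have "\<rho> q < 0" using neg by blast
    moreover have "dist (\<rho> q) (\<rho> (x, FF x)) < \<rho> (x, FF x)" using d1 dq by blast
    ultimately show False by (simp add: dist_real_def)
  qed
  have zd: "D = 0" if "(f has_real_derivative D) (at x)" "\<And>y. f y = 0" for f D x
  proof -
    have "f = (\<lambda>y. 0)" using that(2) by auto
    thus ?thesis using that(1) DERIV_unique DERIV_const by metis
  qed
  have dQ: "(Fk 2 has_real_derivative Fk 3 x) (at x)" for x
    using Fk_deriv[of 2 x] by (simp add: numeral_3_eq_3 numeral_2_eq_2)
  have cha: "((\<lambda>x. a (x, FF x)) has_real_derivative a1 (x, FF x) + a2 (x, FF x) * Fk 1 x) (at x)" for x
    using ch[OF c1(2)] by (simp add: a1_def a2_def)
  have chb: "((\<lambda>x. b (x, FF x)) has_real_derivative b1 (x, FF x) + b2 (x, FF x) * Fk 1 x) (at x)" for x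
    using ch[OF c1(3)] by (simp add: b1_def b2_def)
  have cha1: "((\<lambda>x. a1 (x, FF x)) has_real_derivative D1 a1 (x, FF x) + D2 a1 (x, FF x) * Fk 1 x) (at x)" for x
    using ch[OF c2(1)] by simp
  have cha2: "((\<lambda>x. a2 (x, FF x)) has_real_derivative D1 a2 (x, FF x) + D2 a2 (x, FF x) * Fk 1 x) (at x)" for x
    using ch[OF c2(2)] by simp
  have chb1: "((\<lambda>x. b1 (x, FF x)) has_real_derivative D1 b1 (x, FF x) + D2 b1 (x, FF x) * Fk 1 x) (at x)" for x
    using ch[OF c2(3)] by simp
  have chb2: "((\<lambda>x. b2 (x, FF x)) has_real_derivative D1 b2 (x, FF x) + D2 b2 (x, FF x) * Fk 1 x) (at x)" for x
    using ch[OF c2(4)] by simp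
  have E1: "a (x, FF x) + b (x, FF x) * Fk 1 x = 0" for x
  proof -
    have "((\<lambda>x. \<rho> (x, FF x)) has_real_derivative a (x, FF x) + b (x, FF x) * Fk 1 x) (at x)"
      using ch[OF c1(1)] by (simp add: a_def b_def)
    thus ?thesis using zd z0 by blast
  qed
  have E2: "a1 (x, FF x) + a2 (x, FF x) * Fk 1 x +
      ((b1 (x, FF x) + b2 (x, FF x) * Fk 1 x) * Fk 1 x + Fk 2 x * b (x, FF x)) = 0" for x
    by (rule zd[OF DERIV_add[OF cha DERIV_mult[OF chb dP]]]) (rule E1)
  have E3: "D1 a1 (x, FF x) + D2 a1 (x, FF x) * Fk 1 x +
        ((D1 a2 (x, FF x) + D2 a2 (x, FF x) * Fk 1 x) * Fk 1 x + Fk 2 x * a2 (x, FF x)) +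
       (((D1 b1 (x, FF x) + D2 b1 (x, FF x) * Fk 1 x) +
         ((D1 b2 (x, FF x) + D2 b2 (x, FF x) * Fk 1 x) * Fk 1 x + Fk 2 x * b2 (x, FF x))) * Fk 1 x +
        Fk 2 x * (b1 (x, FF x) + b2 (x, FF x) * Fk 1 x)) +
       ((b1 (x, FF x) + b2 (x, FF x) * Fk 1 x) * Fk 2 x + Fk 3 x * b (x, FF x)) = 0" for x
    by (rule zd[OF DERIV_add[OF DERIV_add[OF DERIV_add[OF cha1 DERIV_mult[OF cha2 dP]]
          DERIV_mult[OF DERIV_add[OF chb1 DERIV_mult[OF chb2 dP]] dP]] DERIV_mult[OF chb dQ]]])
       (use E2 in \<open>simp add: ac_simps\<close>)
  define \<beta> where "\<beta> = B + B * L"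
  define W where "W = \<beta> + \<beta> * L + K * B + (\<beta> + (\<beta> * L + K * B)) * L + K * \<beta> + \<beta> * K"
  have mem: "{a, b, a1, a2, b1, b2, D1 a1, D2 a1, D1 a2, D2 a2, D1 b1, D2 b1, D1 b2, D2 b2} \<subseteq> pderivs 3 \<rho>"
    by (simp add: a_def b_def a1_def a2_def b1_def b2_def numeral_3_eq_3)
  have cL: "0 < c / (1 + L)" using c(1) L0 by simp
  have Rb: "\<bar>Fk 3 x\<bar> \<le> W * (1 + L) / c" for x
  proof -
    define p where "p = (x, FF x)"
    have g: "\<bar>g p\<bar> \<le> B" if "g \<in> {a, b, a1, a2, b1, b2, D1 a1, D2 a1, D1 a2, D2 a2, D1 b1, D2 b1, D1 b2, D2 b2}" for g
      unfolding p_def using gb mem that by blast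
    have P: "\<bar>Fk 1 x\<bar> \<le> L" by (rule L)
    have Q: "\<bar>Fk 2 x\<bar> \<le> K" by (rule K)
    have X1: "\<bar>D1 a1 p + D2 a1 p * Fk 1 x\<bar> \<le> \<beta>" unfolding \<beta>_def by (rule lin1[OF g g P]) auto
    have X2: "\<bar>(D1 a2 p + D2 a2 p * Fk 1 x) * Fk 1 x\<bar> \<le> \<beta> * L"
      unfolding \<beta>_def by (rule abs_mult_le[OF lin1[OF g g P] P]) auto
    have X3: "\<bar>Fk 2 x * a2 p\<bar> \<le> K * B" by (rule abs_mult_le[OF Q g]) auto
    have X4a: "\<bar>(D1 b2 p + D2 b2 p * Fk 1 x) * Fk 1 x\<bar> \<le> \<beta> * L"
      unfolding \<beta>_def by (rule abs_mult_le[OF lin1[OF g g P] P]) auto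
    have X4b: "\<bar>Fk 2 x * b2 p\<bar> \<le> K * B" by (rule abs_mult_le[OF Q g]) auto
    have X4c: "\<bar>D1 b1 p + D2 b1 p * Fk 1 x\<bar> \<le> \<beta>" unfolding \<beta>_def by (rule lin1[OF g g P]) auto
    have "\<bar>(D1 b1 p + D2 b1 p * Fk 1 x) + ((D1 b2 p + D2 b2 p * Fk 1 x) * Fk 1 x + Fk 2 x * b2 p)\<bar>
          \<le> \<beta> + (\<beta> * L + K * B)" using X4a X4b X4c by linarith
    hence X4: "\<bar>((D1 b1 p + D2 b1 p * Fk 1 x) + ((D1 b2 p + D2 b2 p * Fk 1 x) * Fk 1 x + Fk 2 x * b2 p)) * Fk 1 x\<bar>
          \<le> (\<beta> + (\<beta> * L + K * B)) * L" by (rule abs_mult_le[OF _ P])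
    have X5: "\<bar>Fk 2 x * (b1 p + b2 p * Fk 1 x)\<bar> \<le> K * \<beta>"
      unfolding \<beta>_def by (rule abs_mult_le[OF Q lin1[OF g g P]]) auto
    have X6: "\<bar>(b1 p + b2 p * Fk 1 x) * Fk 2 x\<bar> \<le> \<beta> * K"
      unfolding \<beta>_def by (rule abs_mult_le[OF lin1[OF g g P] Q]) auto
    have "\<bar>Fk 3 x * b p\<bar> \<le> W"
      using sum6[OF E3[of x, folded p_def]] X1 X2 X3 X4 X5 X6 unfolding W_def by linarith
    hence Rbb: "\<bar>Fk 3 x\<bar> * \<bar>b p\<bar> \<le> W" by (simp add: abs_mult)
    have "c \<le> norm (grad \<rho> p)" using c(2) inU unfolding p_def by blast
    also have "norm (grad \<rho> p) = sqrt ((a p)^2 + (b p)^2)"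
      by (simp add: grad_def norm_Pair a_def b_def)
    also have "\<dots> \<le> \<bar>a p\<bar> + \<bar>b p\<bar>" by (rule sqrt_sum_squares_le_sum_abs)
    also have "a p = - (b p * Fk 1 x)" using E1[of x] unfolding p_def by linarith
    also have "\<bar>- (b p * Fk 1 x)\<bar> + \<bar>b p\<bar> \<le> \<bar>b p\<bar> * L + \<bar>b p\<bar>"
      using mult_left_mono[OF P, of "\<bar>b p\<bar>"] by (simp add: abs_mult)
    finally have "c \<le> \<bar>b p\<bar> * (1 + L)" by (simp add: algebra_simps)
    hence bb: "c / (1 + L) \<le> \<bar>b p\<bar>" using L0 by (simp add: divide_le_eq)
    have "\<bar>Fk 3 x\<bar> * (c / (1 + L)) \<le> \<bar>Fk 3 x\<bar> * \<bar>b p\<bar>" by (rule mult_left_mono[OF bb]) simp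
    hence "\<bar>Fk 3 x\<bar> * (c / (1 + L)) \<le> W" using Rbb by linarith
    thus ?thesis using c(1) L0 by (simp add: field_simps)
  qed
  obtain x where "\<bar>Fk 3 x\<bar> > W * (1 + L) / c" using G3_unbounded by blast
  thus False using Rb[of x] by linarith
qed


theorem mainTheorem8:
  shows "open Omega2 \<and> connected Omega2 \<and>
         (\<exists>U \<rho>. smooth_defining_function Omega2 U \<rho>) \<and>
         (\<exists>U \<rho>. uniform_defining_function 2 Omega2 U \<rho>) \<and>
         reach (frontier Omega2) > 0 \<and>
         \<not> (\<exists>U \<rho>. uniform_defining_function 3 Omega2 U \<rho>)"
proof (intro conjI)
  show "open Omega2" by (rule Omega2_open)
  show "connected Omega2" by (rule Omega2_connected)
  show "\<exists>U \<rho>. smooth_defining_function Omega2 U \<rho>"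
    unfolding smooth_defining_function_def using rho0_defining by blast
  show "\<exists>U \<rho>. uniform_defining_function 2 Omega2 U \<rho>" using rho0_uniform by blast
  show "reach (frontier Omega2) > 0" by (rule reach_pos)
  show "\<not> (\<exists>U \<rho>. uniform_defining_function 3 Omega2 U \<rho>)" by (rule no_uniform3)
qed

end
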